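(* Let $(V,E)$ be a finite graph and $p\in[0,1]$. Let $(\eta_t,\sigma_t)_{t\ge0}$ be a continuous-time Markov jump process on $\{0,1\}^E\times\{-1,1\}^V$ with the following rates: (i) if $\eta'=\eta$ and there is $x\in V$ with $\sigma'=\sigma^x$ and $\eta(e)=0$ for all $e\in E_x$, the rate from $(\eta,\sigma)$ to $(\eta',\sigma')$ is $1$; (ii) if $\sigma'=\sigma$ and there is $e\in E$ with $\eta'=\eta^e$, the rate is $p\mathbf 1_{\eta(e)=0}\delta_\sigma(e)+(1-p)\mathbf 1_{\eta(e)=1}$; (iii) all other off-diagonal rates are $0$. Suppose $(\eta_0,\sigma_0)$ is distributed according to $IP$. Then for every $e\in E$, every $\eta\in\{0,1\}^E$ and every $s\ge0$, $$\lim_{t\to0}\frac1t\,\mathbb P(\eta_{t+s}=\eta^e\mid\eta_s=\eta)=(1-p)\mathbf 1_{\eta(e)=1}+p\,\mathbf 1_{\eta(e)=0,\ \gamma_\eta(e)=1}+\frac p2\,\mathbf 1_{\eta(e)=0,\ \gamma_\eta(e)=0}.$$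
   Context: Edge configurations $\eta\in\{0,1\}^E$ (1 = open), spin configurations $\sigma\in\{-1,1\}^V$. For $e=\langle x,y\rangle$, $\delta_\sigma(e)=\mathbf 1_{\sigma(x)=\sigma(y)}$. $IP(\eta,\sigma)=\frac1Z\prod_{e\in E}\big(p\mathbf 1_{\eta(e)=1}\delta_\sigma(e)+(1-p)\mathbf 1_{\eta(e)=0}\big)$ with $Z$ the normalizing constant. $E_x$ is the set of edges with endvertex $x$; $\sigma^x$ is $\sigma$ with the spin at $x$ flipped; $\eta^e$ is $\eta$ with the value at edge $e$ changed. For $e=\langle x,y\rangle$, $\gamma_\eta(e)=1$ if $x$ and $y$ are connected by a path of open edges of $\eta$ not using $e$, and $\gamma_\eta(e)=0$ otherwise. *)

theory Defs
  imports "HOL-Analysis.Analysis"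
begin

text \<open>
  Finite simple graph: vertex set = the finite type 'v, edge set E a set of
  two-element subsets of vertices.  Edge configurations eta :: 'v set \<Rightarrow> bool
  (True = open = 1), required to be False outside E; spin configurations
  sigma :: 'v \<Rightarrow> int with values in {-1,1}.
\<close>

type_synonym 'v state = "('v set \<Rightarrow> bool) \<times> ('v \<Rightarrow> int)"

definition simple_graph :: "'v set set \<Rightarrow> bool" where
  "simple_graph E \<longleftrightarrow> (\<forall>e\<in>E. \<exists>x y. x \<noteq> y \<and> e = {x, y})"

definition edge_configs :: "'v set set \<Rightarrow> ('v set \<Rightarrow> bool) set" where
  "edge_configs E = {\<eta>. \<forall>e. e \<notin> E \<longrightarrow> \<not> \<eta> e}"

definition spin_configs :: "('v \<Rightarrow> int) set" where
  "spin_configs = {\<sigma>. \<forall>x. \<sigma> x \<in> {-1, 1}}"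

definition states :: "'v set set \<Rightarrow> 'v state set" where
  "states E = edge_configs E \<times> spin_configs"

definition delta :: "('v \<Rightarrow> int) \<Rightarrow> 'v set \<Rightarrow> bool" where
  "delta \<sigma> e \<longleftrightarrow> (\<forall>x\<in>e. \<forall>y\<in>e. \<sigma> x = \<sigma> y)"

definition flip_spin :: "('v \<Rightarrow> int) \<Rightarrow> 'v \<Rightarrow> ('v \<Rightarrow> int)" where
  "flip_spin \<sigma> x = \<sigma>(x := - \<sigma> x)"

definition flip_edge :: "('v set \<Rightarrow> bool) \<Rightarrow> 'v set \<Rightarrow> ('v set \<Rightarrow> bool)" where
  "flip_edge \<eta> e = \<eta>(e := \<not> \<eta> e)"

text \<open>Off-diagonal jump rates (i)-(iii).  For a \<noteq> b at most one summand is nonzero.\<close>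
definition rate :: "'v::finite set set \<Rightarrow> real \<Rightarrow> 'v state \<Rightarrow> 'v state \<Rightarrow> real" where
  "rate E p a b =
     (if a = b then 0 else
       (\<Sum>x\<in>UNIV. if fst b = fst a \<and> snd b = flip_spin (snd a) x
                       \<and> (\<forall>e\<in>E. x \<in> e \<longrightarrow> \<not> fst a e) then 1 else 0)
     + (\<Sum>e\<in>E. if snd b = snd a \<and> fst b = flip_edge (fst a) e
                 then p * (if \<not> fst a e \<and> delta (snd a) e then 1 else 0)
                      + (1 - p) * (if fst a e then 1 else 0)
                 else 0))"

definition generator :: "'v::finite set set \<Rightarrow> real \<Rightarrow> 'v state \<Rightarrow> 'v state \<Rightarrow> real" where
  "generator E p a b =
     (if a = b then - (\<Sum>c\<in>states E - {a}. rate E p a c) else rate E p a b)"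

fun gen_pow :: "'v::finite set set \<Rightarrow> real \<Rightarrow> nat \<Rightarrow> 'v state \<Rightarrow> 'v state \<Rightarrow> real" where
  "gen_pow E p 0 a b = (if a = b then 1 else 0)"
| "gen_pow E p (Suc n) a b = (\<Sum>c\<in>states E. generator E p a c * gen_pow E p n c b)"

definition trans :: "'v::finite set set \<Rightarrow> real \<Rightarrow> real \<Rightarrow> 'v state \<Rightarrow> 'v state \<Rightarrow> real" where
  "trans E p t a b = (\<Sum>n. t ^ n / fact n * gen_pow E p n a b)"

definition IP_weight :: "'v set set \<Rightarrow> real \<Rightarrow> 'v state \<Rightarrow> real" where
  "IP_weight E p a =
     (\<Prod>e\<in>E. p * (if fst a e \<and> delta (snd a) e then 1 else 0)
              + (1 - p) * (if \<not> fst a e then 1 else 0))"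

definition IP :: "'v::finite set set \<Rightarrow> real \<Rightarrow> 'v state \<Rightarrow> real" where
  "IP E p a = IP_weight E p a / (\<Sum>c\<in>states E. IP_weight E p c)"

text \<open>P(eta_s = eta and eta_{s+t} = eta') for the process started from IP.\<close>
definition joint_edge_prob ::
  "'v::finite set set \<Rightarrow> real \<Rightarrow> real \<Rightarrow> real \<Rightarrow> ('v set \<Rightarrow> bool) \<Rightarrow> ('v set \<Rightarrow> bool) \<Rightarrow> real" where
  "joint_edge_prob E p s t \<eta> \<eta>' =
     (\<Sum>a\<in>{a\<in>states E. fst a = \<eta>}. \<Sum>b\<in>{b\<in>states E. fst b = \<eta>'}.
        (\<Sum>c\<in>states E. IP E p c * trans E p s c a) * trans E p t a b)"

text \<open>P(eta_s = eta) for the process started from IP.\<close>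
definition edge_prob :: "'v::finite set set \<Rightarrow> real \<Rightarrow> real \<Rightarrow> ('v set \<Rightarrow> bool) \<Rightarrow> real" where
  "edge_prob E p s \<eta> =
     (\<Sum>a\<in>{a\<in>states E. fst a = \<eta>}. \<Sum>c\<in>states E. IP E p c * trans E p s c a)"

definition open_step :: "'v set set \<Rightarrow> ('v set \<Rightarrow> bool) \<Rightarrow> 'v set \<Rightarrow> 'v \<Rightarrow> 'v \<Rightarrow> bool" where
  "open_step E \<eta> e u w \<longleftrightarrow> (\<exists>f\<in>E. f \<noteq> e \<and> \<eta> f \<and> f = {u, w})"

definition gamma :: "'v set set \<Rightarrow> ('v set \<Rightarrow> bool) \<Rightarrow> 'v set \<Rightarrow> bool" where
  "gamma E \<eta> e \<longleftrightarrow> (\<exists>x y. e = {x, y} \<and> x \<noteq> y \<and> (open_step E \<eta> e)\<^sup>*\<^sup>* x y)"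

end

theory Submission
  imports Defs
begin


lemma finite_spin: "finite (spin_configs :: ('v::finite \<Rightarrow> int) set)"
proof -
  have "spin_configs = (Pi\<^sub>E (UNIV::'v set) (\<lambda>_. {-1,1::int}))"
    by (auto simp: spin_configs_def PiE_UNIV_domain Pi_def)
  show ?thesis by (subst \<open>spin_configs = _\<close>) (rule finite_PiE; simp)
qed

lemma finite_states: "finite (states (E :: 'v::finite set set))"
proof -
  have "finite (edge_configs E)" by (rule finite_subset[OF subset_UNIV]) simp
  then show ?thesis unfolding states_def using finite_spin by (rule finite_cartesian_product)
qed

lemma delta2: "delta \<sigma> {u, w} = (\<sigma> u = \<sigma> w)"
  by (auto simp: delta_def)

lemma spin_ne0: "\<sigma> \<in> spin_configs \<Longrightarrow> \<sigma> x \<noteq> 0"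
  by (auto simp: spin_configs_def dest: spec[of _ x])

lemma flip_spin_inj: "\<sigma> \<in> spin_configs \<Longrightarrow> flip_spin \<sigma> y = flip_spin \<sigma> x \<longleftrightarrow> y = x"
proof
  assume s: "\<sigma> \<in> spin_configs" and h: "flip_spin \<sigma> y = flip_spin \<sigma> x"
  show "y = x"
  proof (rule ccontr)
    assume "y \<noteq> x"
    then have "flip_spin \<sigma> y y = - \<sigma> y" "flip_spin \<sigma> x y = \<sigma> y" by (auto simp: flip_spin_def)
    with h spin_ne0[OF s, of y] show False by simp
  qed
qed simp

lemma flip_spin_ne: "\<sigma> \<in> spin_configs \<Longrightarrow> flip_spin \<sigma> x \<noteq> \<sigma>"
  using spin_ne0[of \<sigma> x] by (auto simp: flip_spin_def fun_eq_iff dest: spec[of _ x])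

lemma flip_spin_flip: "flip_spin (flip_spin \<sigma> x) x = \<sigma>"
  by (auto simp: flip_spin_def)

lemma flip_spin_in: "\<sigma> \<in> spin_configs \<Longrightarrow> flip_spin \<sigma> x \<in> spin_configs"
  by (auto simp: flip_spin_def spin_configs_def)

lemma flip_edge_inj: "flip_edge \<eta> f = flip_edge \<eta> e \<longleftrightarrow> f = e"
  by (auto simp: flip_edge_def fun_eq_iff)

lemma flip_edge_ne: "flip_edge \<eta> e \<noteq> \<eta>"
  by (auto simp: flip_edge_def fun_eq_iff)

lemma flip_edge_flip: "flip_edge (flip_edge \<eta> e) e = \<eta>"
  by (auto simp: flip_edge_def)

lemma flip_edge_in: "\<eta> \<in> edge_configs E \<Longrightarrow> e \<in> E \<Longrightarrow> flip_edge \<eta> e \<in> edge_configs E"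
  by (auto simp: flip_edge_def edge_configs_def)

lemma rate_nz:
  assumes "rate E p a b \<noteq> 0"
  shows "(fst b = fst a \<and> (\<exists>x. snd b = flip_spin (snd a) x)) \<or>
         (snd b = snd a \<and> (\<exists>f\<in>E. fst b = flip_edge (fst a) f))"
proof (rule ccontr)
  assume n: "\<not> ?thesis"
  have "rate E p a b = 0"
    unfolding rate_def using n by (auto intro!: sum.neutral)
  with assms show False by simp
qed

lemma rate_spin:
  assumes "\<sigma> \<in> spin_configs"
  shows "rate E p (\<eta>, \<sigma>) (\<eta>, flip_spin \<sigma> x) = (if \<forall>f\<in>E. x \<in> f \<longrightarrow> \<not> \<eta> f then 1 else 0)"
proof -
  have ne: "(\<eta>, \<sigma>) \<noteq> (\<eta>, flip_spin \<sigma> x)"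
  proof
    assume "(\<eta>, \<sigma>) = (\<eta>, flip_spin \<sigma> x)"
    then have "flip_spin \<sigma> x = \<sigma>" by (simp only: prod.inject)
    with flip_spin_ne[OF assms, of x] show False by blast
  qed
  have 1: "(\<Sum>y\<in>UNIV. if \<eta> = \<eta> \<and> flip_spin \<sigma> x = flip_spin \<sigma> y
                       \<and> (\<forall>e\<in>E. y \<in> e \<longrightarrow> \<not> \<eta> e) then 1 else 0) =
     (\<Sum>y\<in>UNIV. if y = x then (if \<forall>f\<in>E. x \<in> f \<longrightarrow> \<not> \<eta> f then 1 else 0) else (0::real))"
  proof (rule sum.cong)
    fix y
    have "(flip_spin \<sigma> x = flip_spin \<sigma> y) = (y = x)" using flip_spin_inj[OF assms, of y x] by metis
    then show "(if \<eta> = \<eta> \<and> flip_spin \<sigma> x = flip_spin \<sigma> y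
                       \<and> (\<forall>e\<in>E. y \<in> e \<longrightarrow> \<not> \<eta> e) then 1 else 0) =
       (if y = x then (if \<forall>f\<in>E. x \<in> f \<longrightarrow> \<not> \<eta> f then 1 else 0) else (0::real))"
      by (simp only: simp_thms) (cases "y = x"; simp)
  qed simp
  have 2: "(\<Sum>e\<in>E. if flip_spin \<sigma> x = \<sigma> \<and> \<eta> = flip_edge \<eta> e
                 then p * (if \<not> \<eta> e \<and> delta \<sigma> e then 1 else 0)
                      + (1 - p) * (if \<eta> e then 1 else 0)
                 else 0) = 0"
    using flip_spin_ne[OF assms, of x] by simp
  show ?thesis unfolding rate_def fst_conv snd_conv 1 2 using ne by simp
qed

lemma rate_edge:
  assumes "f \<in> E"
  shows "rate E p (\<eta>, \<sigma>) (flip_edge \<eta> f, \<sigma>) =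
     p * (if \<not> \<eta> f \<and> delta \<sigma> f then 1 else 0) + (1 - p) * (if \<eta> f then 1 else 0)"
proof -
  have ne: "(\<eta>, \<sigma>) \<noteq> (flip_edge \<eta> f, \<sigma>)" using flip_edge_ne by (metis prod.inject)
  have 1: "(\<Sum>y\<in>UNIV. if flip_edge \<eta> f = \<eta> \<and> \<sigma> = flip_spin \<sigma> y
                       \<and> (\<forall>e\<in>E. y \<in> e \<longrightarrow> \<not> \<eta> e) then 1 else (0::real)) = 0"
    by (simp add: flip_edge_ne)
  have 2: "(\<Sum>e\<in>E. if \<sigma> = \<sigma> \<and> flip_edge \<eta> f = flip_edge \<eta> e
                 then p * (if \<not> \<eta> e \<and> delta \<sigma> e then 1 else 0)
                      + (1 - p) * (if \<eta> e then 1 else 0)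
                 else 0) = (\<Sum>e\<in>E. if e = f then p * (if \<not> \<eta> f \<and> delta \<sigma> f then 1 else 0)
                      + (1 - p) * (if \<eta> f then 1 else 0) else 0)"
    by (rule sum.cong) (auto simp: flip_edge_inj)
  show ?thesis unfolding rate_def fst_conv snd_conv 1 2 using ne assms by simp
qed


lemma W_spin:
  assumes "\<forall>f\<in>E. x \<in> f \<longrightarrow> \<not> \<eta> f"
  shows "IP_weight E p (\<eta>, flip_spin \<sigma> x) = IP_weight E p (\<eta>, \<sigma>)"
  unfolding IP_weight_def fst_conv snd_conv
proof (rule prod.cong)
  fix f assume f: "f \<in> E"
  show "p * (if \<eta> f \<and> delta (flip_spin \<sigma> x) f then 1 else 0) + (1 - p) * (if \<not> \<eta> f then 1 else 0) =
        p * (if \<eta> f \<and> delta \<sigma> f then 1 else 0) + (1 - p) * (if \<not> \<eta> f then 1 else 0)"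
  proof (cases "\<eta> f")
    case True
    then have "x \<notin> f" using assms f by blast
    then have "\<forall>u\<in>f. flip_spin \<sigma> x u = \<sigma> u" by (auto simp: flip_spin_def)
    then have "delta (flip_spin \<sigma> x) f = delta \<sigma> f" by (simp add: delta_def)
    then show ?thesis by simp
  qed simp
qed simp

lemma W_edge:
  fixes E :: "'v::finite set set"
  assumes f: "f \<in> E"
  shows "IP_weight E p (\<eta>, \<sigma>) * (p * (if \<not> \<eta> f \<and> delta \<sigma> f then 1 else 0) + (1 - p) * (if \<eta> f then 1 else 0))
       = IP_weight E p (flip_edge \<eta> f, \<sigma>) * (p * (if \<not> flip_edge \<eta> f f \<and> delta \<sigma> f then 1 else 0) + (1 - p) * (if flip_edge \<eta> f f then 1 else 0))"
proof -
  have fin: "finite E" by simp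
  define g where "g \<eta>' = (\<lambda>e. p * (if \<eta>' e \<and> delta \<sigma> e then 1 else 0) + (1 - p) * (if \<not> \<eta>' e then 1 else (0::real)))" for \<eta>'
  have W: "IP_weight E p (\<eta>', \<sigma>) = g \<eta>' f * prod (g \<eta>') (E - {f})" for \<eta>'
    unfolding IP_weight_def fst_conv snd_conv g_def[symmetric]
    using prod.remove[OF fin f] by simp
  have R: "prod (g (flip_edge \<eta> f)) (E - {f}) = prod (g \<eta>) (E - {f})"
    by (rule prod.cong) (auto simp: g_def flip_edge_def)
  show ?thesis unfolding W R
    by (cases "\<eta> f") (simp_all add: g_def flip_edge_def algebra_simps)
qed

lemma detailed_balance:
  fixes E :: "'v::finite set set"
  assumes a: "a \<in> states E" and b: "b \<in> states E"
  shows "IP_weight E p a * rate E p a b = IP_weight E p b * rate E p b a"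
proof -
  obtain \<eta> \<sigma> where ae: "a = (\<eta>, \<sigma>)" by fastforce
  obtain \<eta>' \<sigma>' where be: "b = (\<eta>', \<sigma>')" by fastforce
  have s: "\<sigma> \<in> spin_configs" and s': "\<sigma>' \<in> spin_configs" using a b ae be by (auto simp: states_def)
  show ?thesis
  proof (cases "\<eta>' = \<eta> \<and> (\<exists>x. \<sigma>' = flip_spin \<sigma> x)")
    case True
    then obtain x where e1: "\<eta>' = \<eta>" and e2: "\<sigma>' = flip_spin \<sigma> x" by blast
    have r1: "rate E p a b = (if \<forall>f\<in>E. x \<in> f \<longrightarrow> \<not> \<eta> f then 1 else 0)"
      unfolding ae be e1 e2 by (rule rate_spin[OF s])
    have r2: "rate E p b a = (if \<forall>f\<in>E. x \<in> f \<longrightarrow> \<not> \<eta> f then 1 else 0)"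
      using rate_spin[OF s', of E p \<eta> x] unfolding ae be e1 e2 flip_spin_flip .
    show ?thesis unfolding r1 r2 unfolding ae be e1 e2 using W_spin[of E x \<eta> p \<sigma>] by simp
  next
    case F1: False
    show ?thesis
    proof (cases "\<sigma>' = \<sigma> \<and> (\<exists>f\<in>E. \<eta>' = flip_edge \<eta> f)")
      case True
      then obtain f where e1: "\<sigma>' = \<sigma>" and f: "f \<in> E" and e2: "\<eta>' = flip_edge \<eta> f" by blast
      show ?thesis unfolding ae be e1 e2
        using W_edge[OF f, of p \<eta> \<sigma>] rate_edge[OF f, of p \<eta> \<sigma>] rate_edge[OF f, of p "flip_edge \<eta> f" \<sigma>]
        unfolding flip_edge_flip by simp
    next
      case F2: False
      have "rate E p a b = 0" using rate_nz[of E p a b] F1 F2 ae be by auto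
      moreover have "rate E p b a = 0"
      proof (rule ccontr)
        assume "rate E p b a \<noteq> 0"
        from rate_nz[OF this] have "(\<eta> = \<eta>' \<and> (\<exists>x. \<sigma> = flip_spin \<sigma>' x)) \<or> (\<sigma> = \<sigma>' \<and> (\<exists>f\<in>E. \<eta> = flip_edge \<eta>' f))"
          unfolding ae be fst_conv snd_conv .
        then show False
        proof
          assume "\<eta> = \<eta>' \<and> (\<exists>x. \<sigma> = flip_spin \<sigma>' x)"
          then obtain x where "\<eta> = \<eta>'" "\<sigma> = flip_spin \<sigma>' x" by blast
          then have "\<eta>' = \<eta> \<and> \<sigma>' = flip_spin \<sigma> x" using flip_spin_flip[of \<sigma>' x] by metis
          with F1 show False by blast
        next
          assume "\<sigma> = \<sigma>' \<and> (\<exists>f\<in>E. \<eta> = flip_edge \<eta>' f)"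
          then obtain f where "\<sigma> = \<sigma>'" "f \<in> E" "\<eta> = flip_edge \<eta>' f" by blast
          then have "\<sigma>' = \<sigma> \<and> f \<in> E \<and> \<eta>' = flip_edge \<eta> f" using flip_edge_flip[of \<eta>' f] by metis
          with F2 show False by blast
        qed
      qed
      ultimately show ?thesis by simp
    qed
  qed
qed

lemma global_balance:
  fixes E :: "'v::finite set set"
  assumes d: "d \<in> states E"
  shows "(\<Sum>c\<in>states E. IP_weight E p c * generator E p c d) = 0"
proof -
  let ?S = "states E"
  have fin: "finite ?S" by (rule finite_states)
  have "(\<Sum>c\<in>?S. IP_weight E p c * generator E p c d) =
        IP_weight E p d * generator E p d d + (\<Sum>c\<in>?S - {d}. IP_weight E p c * generator E p c d)"
    using sum.remove[OF fin d] by simp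
  also have "(\<Sum>c\<in>?S - {d}. IP_weight E p c * generator E p c d) = (\<Sum>c\<in>?S - {d}. IP_weight E p d * rate E p d c)"
    by (rule sum.cong) (auto simp: generator_def detailed_balance[OF _ d])
  also have "\<dots> = IP_weight E p d * (\<Sum>c\<in>?S - {d}. rate E p d c)" by (simp add: sum_distrib_left)
  finally show ?thesis by (simp add: generator_def)
qed

lemma stat_pow:
  fixes E :: "'v::finite set set"
  shows "(\<Sum>c\<in>states E. IP_weight E p c * gen_pow E p n c a) = (if n = 0 then (if a \<in> states E then IP_weight E p a else 0) else 0)"
proof (cases n)
  case 0
  then show ?thesis using finite_states[of E] by (simp add: if_distrib cong: if_cong)
next
  case (Suc m)
  have "(\<Sum>c\<in>states E. IP_weight E p c * gen_pow E p n c a) =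
        (\<Sum>c\<in>states E. \<Sum>d\<in>states E. IP_weight E p c * generator E p c d * gen_pow E p m d a)"
    by (simp add: Suc sum_distrib_left mult.assoc)
  also have "\<dots> = (\<Sum>d\<in>states E. \<Sum>c\<in>states E. IP_weight E p c * generator E p c d * gen_pow E p m d a)"
    by (rule sum.swap)
  also have "\<dots> = (\<Sum>d\<in>states E. (\<Sum>c\<in>states E. IP_weight E p c * generator E p c d) * gen_pow E p m d a)"
    by (simp add: sum_distrib_right)
  also have "\<dots> = 0" by (simp add: global_balance)
  finally show ?thesis using Suc by simp
qed


definition Mb :: "'v::finite set set \<Rightarrow> real \<Rightarrow> real" where
  "Mb E p = (\<Sum>a\<in>states E. \<Sum>c\<in>states E. \<bar>generator E p a c\<bar>)"

lemma Mb_nonneg: "0 \<le> Mb E p"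
  unfolding Mb_def by (intro sum_nonneg) auto

lemma row_le_Mb:
  assumes "a \<in> states E"
  shows "(\<Sum>c\<in>states E. \<bar>generator E p a c\<bar>) \<le> Mb E p"
  unfolding Mb_def
  by (rule member_le_sum[OF assms]) (auto intro: sum_nonneg finite_states)

lemma gen_bound:
  fixes E :: "'v::finite set set"
  assumes "a \<in> states E"
  shows "\<bar>gen_pow E p n a b\<bar> \<le> Mb E p ^ n"
  using assms
proof (induction n arbitrary: a)
  case 0
  then show ?case by simp
next
  case (Suc n)
  have "\<bar>gen_pow E p (Suc n) a b\<bar> \<le> (\<Sum>c\<in>states E. \<bar>generator E p a c * gen_pow E p n c b\<bar>)"
    by (simp only: gen_pow.simps) (rule sum_abs)
  also have "\<dots> \<le> (\<Sum>c\<in>states E. \<bar>generator E p a c\<bar> * Mb E p ^ n)"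
    by (rule sum_mono) (auto simp: abs_mult intro!: mult_left_mono Suc.IH)
  also have "\<dots> = (\<Sum>c\<in>states E. \<bar>generator E p a c\<bar>) * Mb E p ^ n"
    by (simp add: sum_distrib_right)
  also have "\<dots> \<le> Mb E p * Mb E p ^ n"
    by (rule mult_right_mono[OF row_le_Mb[OF Suc.prems]]) (simp add: Mb_nonneg)
  finally show ?case by simp
qed

lemma exp_summ: "summable (\<lambda>n. (x::real) ^ n / fact n)"
  using summable_exp[of x] by (simp add: field_simps)

lemma trans_summable:
  fixes E :: "'v::finite set set"
  assumes "a \<in> states E"
  shows "summable (\<lambda>n. t ^ n / fact n * gen_pow E p n a b)"
proof (rule summable_comparison_test[OF _ exp_summ[of "\<bar>t\<bar> * Mb E p"]])
  show "\<exists>N. \<forall>n\<ge>N. norm (t ^ n / fact n * gen_pow E p n a b) \<le> (\<bar>t\<bar> * Mb E p) ^ n / fact n"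
  proof (intro exI allI impI)
    fix n :: nat
    have "norm (t ^ n / fact n * gen_pow E p n a b) = \<bar>t\<bar> ^ n / fact n * \<bar>gen_pow E p n a b\<bar>"
      by (simp add: abs_mult power_abs)
    also have "\<dots> \<le> \<bar>t\<bar> ^ n / fact n * Mb E p ^ n"
      by (rule mult_left_mono[OF gen_bound[OF assms]]) simp
    finally show "norm (t ^ n / fact n * gen_pow E p n a b) \<le> (\<bar>t\<bar> * Mb E p) ^ n / fact n"
      by (simp add: power_mult_distrib)
  qed
qed

lemma stationary:
  fixes E :: "'v::finite set set"
  assumes a: "a \<in> states E"
  shows "(\<Sum>c\<in>states E. IP E p c * trans E p s c a) = IP E p a"
proof -
  define Z where "Z = (\<Sum>c\<in>states E. IP_weight E p c)"
  have "(\<Sum>c\<in>states E. IP E p c * trans E p s c a) =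
        (\<Sum>c\<in>states E. \<Sum>n. IP E p c * (s ^ n / fact n * gen_pow E p n c a))"
    unfolding trans_def by (intro sum.cong refl suminf_mult[symmetric] trans_summable) auto
  also have "\<dots> = (\<Sum>n. \<Sum>c\<in>states E. IP E p c * (s ^ n / fact n * gen_pow E p n c a))"
    by (rule suminf_sum[symmetric]) (intro summable_mult trans_summable, auto)
  also have "(\<lambda>n. \<Sum>c\<in>states E. IP E p c * (s ^ n / fact n * gen_pow E p n c a)) =
             (\<lambda>n. s ^ n / fact n / Z * (\<Sum>c\<in>states E. IP_weight E p c * gen_pow E p n c a))"
    by (simp add: IP_def Z_def[symmetric] sum_distrib_left sum_divide_distrib mult_ac)
  also have "\<dots> = (\<lambda>n. if n = 0 then IP E p a else 0)"
    using a by (auto simp: stat_pow IP_def Z_def fun_eq_iff)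
  also have "(\<Sum>n. if n = 0 then IP E p a else 0) = IP E p a"
    using sums_single[of 0 "\<lambda>_. IP E p a"] by (simp add: sums_iff)
  finally show ?thesis .
qed


lemma gen_pow1:
  fixes E :: "'v::finite set set"
  assumes "b \<in> states E"
  shows "gen_pow E p (Suc 0) a b = generator E p a b"
proof -
  have "gen_pow E p (Suc 0) a b = (\<Sum>c\<in>states E. if c = b then generator E p a b else 0)"
    by (simp only: gen_pow.simps) (rule sum.cong, auto)
  also have "\<dots> = generator E p a b" using assms finite_states[of E] by simp
  finally show ?thesis .
qed

lemma small_t:
  fixes E :: "'v::finite set set"
  assumes a: "a \<in> states E" and b: "b \<in> states E" and ab: "a \<noteq> b"
  shows "((\<lambda>t. trans E p t a b / t) \<longlongrightarrow> generator E p a b) (at_right 0)"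
proof -
  define M where "M = Mb E p"
  have M0: "0 \<le> M" unfolding M_def by (rule Mb_nonneg)
  define h where "h n = M ^ (n + 2) / fact (n + 2)" for n
  have hs: "summable h" unfolding h_def
    using summable_ignore_initial_segment[OF exp_summ[of M], of 2] by simp
  define C where "C = suminf h"
  define f where "f t n = t ^ n / fact n * gen_pow E p n a b" for t :: real and n
  have bound: "\<bar>trans E p t a b / t - generator E p a b\<bar> \<le> t * C" if t0: "0 < t" and t1: "t < 1" for t
  proof -
    have fs: "summable (f t)" unfolding f_def by (rule trans_summable[OF a])
    have "trans E p t a b = (\<Sum>n. f t (n + 2)) + sum (f t) {..<2}"
      unfolding trans_def f_def[symmetric] by (rule suminf_split_initial_segment[OF fs])
    also have "sum (f t) {..<2} = t * generator E p a b"
      using ab by (simp del: gen_pow.simps add: gen_pow.simps(1) f_def numeral_2_eq_2 gen_pow1[OF b])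
    finally have tr: "trans E p t a b = (\<Sum>n. f t (n + 2)) + t * generator E p a b" .
    have nb: "norm (f t (n + 2)) \<le> t ^ 2 * h n" for n
    proof -
      have "norm (f t (n + 2)) = t ^ (n + 2) / fact (n + 2) * \<bar>gen_pow E p (n + 2) a b\<bar>"
        using t0 by (simp add: f_def abs_mult)
      also have "\<dots> \<le> t ^ (n + 2) / fact (n + 2) * M ^ (n + 2)"
        by (rule mult_left_mono) (use gen_bound[OF a, of p "n + 2" b] t0 M_def in simp_all)
      also have "t ^ (n + 2) \<le> t ^ 2"
        using t0 t1 by (intro power_decreasing) auto
      then have "t ^ (n + 2) / fact (n + 2) * M ^ (n + 2) \<le> t ^ 2 / fact (n + 2) * M ^ (n + 2)"
        using M0 by (intro mult_right_mono divide_right_mono) auto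
      finally show ?thesis by (simp add: h_def)
    qed
    have "norm (\<Sum>n. f t (n + 2)) \<le> (\<Sum>n. t ^ 2 * h n)"
      by (rule norm_suminf_le[OF nb]) (intro summable_mult hs)
    also have "\<dots> = t ^ 2 * C" unfolding C_def by (rule suminf_mult[OF hs])
    finally have "\<bar>\<Sum>n. f t (n + 2)\<bar> \<le> t ^ 2 * C" by simp
    moreover have "trans E p t a b / t - generator E p a b = (\<Sum>n. f t (n + 2)) / t"
      using t0 unfolding tr by (simp add: field_simps)
    ultimately show ?thesis using t0 by (simp add: divide_le_eq power2_eq_square mult_ac)
  qed
  have ev: "\<forall>\<^sub>F t in at_right 0. norm (trans E p t a b / t - generator E p a b) \<le> t * C"
    unfolding eventually_at_right_field using bound by (intro exI[of _ 1]) auto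
  have lim0: "((\<lambda>t. t * C) \<longlongrightarrow> 0) (at_right (0::real))"
    using tendsto_mult_right[OF tendsto_ident_at[of "0::real" "{0<..}"], of C] by simp
  show ?thesis
    by (subst Lim_null) (rule Lim_null_comparison[OF ev lim0])
qed


lemma W_support:
  fixes E :: "'v::finite set set"
  assumes "IP_weight E p (\<eta>, \<sigma>) \<noteq> 0" "f \<in> E" "\<eta> f"
  shows "delta \<sigma> f"
proof -
  have "finite E" by simp
  then have "\<forall>g\<in>E. p * (if \<eta> g \<and> delta \<sigma> g then 1 else 0) + (1 - p) * (if \<not> \<eta> g then 1 else 0) \<noteq> (0::real)"
    using assms(1) unfolding IP_weight_def fst_conv snd_conv by (simp add: prod_zero_iff)
  then have "p * (if \<eta> f \<and> delta \<sigma> f then 1 else 0) + (1 - p) * (if \<not> \<eta> f then 1 else 0) \<noteq> (0::real)"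
    using assms(2) by blast
  then show ?thesis using assms(3) by (cases "delta \<sigma> f") auto
qed

lemma gamma_case:
  fixes E :: "'v::finite set set"
  assumes g: "gamma E \<eta> e" and W: "IP_weight E p (\<eta>, \<sigma>) \<noteq> 0"
  shows "delta \<sigma> e"
proof -
  obtain x y where e: "e = {x, y}" and r: "(open_step E \<eta> e)\<^sup>*\<^sup>* x y"
    using g unfolding gamma_def by blast
  have "\<sigma> x = \<sigma> v" if "(open_step E \<eta> e)\<^sup>*\<^sup>* x v" for v
    using that
  proof (induction rule: rtranclp_induct)
    case (step u w)
    then obtain f where "f \<in> E" "\<eta> f" "f = {u, w}" unfolding open_step_def by blast
    then have "delta \<sigma> f" using W_support[OF W] by blast
    with \<open>f = {u, w}\<close> step.IH show ?case by (simp add: delta2)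
  qed simp
  from this[OF r] show ?thesis unfolding e delta2 .
qed

lemma nongamma_sum:
  fixes E :: "'v::finite set set"
  assumes sg: "simple_graph E" and eE: "e \<in> E" and ne: "\<not> \<eta> e" and ng: "\<not> gamma E \<eta> e"
  shows "(\<Sum>\<sigma>\<in>spin_configs. IP_weight E p (\<eta>, \<sigma>) * (if delta \<sigma> e then 1 else 0))
       = (\<Sum>\<sigma>\<in>spin_configs. IP_weight E p (\<eta>, \<sigma>)) / 2"
proof -
  obtain x y where e: "e = {x, y}" and xy: "x \<noteq> y" using sg eE unfolding simple_graph_def by blast
  define C where "C = {v. (open_step E \<eta> e)\<^sup>*\<^sup>* x v}"
  have xC: "x \<in> C" unfolding C_def by simp
  have yC: "y \<notin> C" using ng e xy unfolding C_def gamma_def by blast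
  define \<phi> where "\<phi> \<sigma> = (\<lambda>v. if v \<in> C then - \<sigma> v else \<sigma> v)" for \<sigma> :: "'v \<Rightarrow> int"
  have inv: "\<phi> (\<phi> \<sigma>) = \<sigma>" for \<sigma> unfolding \<phi>_def by auto
  have inS: "\<phi> \<sigma> \<in> spin_configs" if "\<sigma> \<in> spin_configs" for \<sigma>
    using that unfolding \<phi>_def spin_configs_def by auto
  have dflip: "delta (\<phi> \<sigma>) e = (\<not> delta \<sigma> e)" if "\<sigma> \<in> spin_configs" for \<sigma>
  proof -
    have "\<sigma> x \<in> {-1,1}" "\<sigma> y \<in> {-1,1}" using that unfolding spin_configs_def by auto
    then show ?thesis using xC yC unfolding e delta2 \<phi>_def by auto
  qed
  have closed: "u \<in> C \<longleftrightarrow> w \<in> C" if "f \<in> E" "\<eta> f" "f = {u, w}" for f u w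
  proof -
    have fe: "f \<noteq> e" using that ne by auto
    have "open_step E \<eta> e u w" "open_step E \<eta> e w u"
      using that fe unfolding open_step_def by (auto simp: insert_commute)
    then show ?thesis unfolding C_def mem_Collect_eq
      by (meson rtranclp.rtrancl_into_rtrancl)
  qed
  have Weq: "IP_weight E p (\<eta>, \<phi> \<sigma>) = IP_weight E p (\<eta>, \<sigma>)" for \<sigma> :: "'v \<Rightarrow> int"
    unfolding IP_weight_def fst_conv snd_conv
  proof (rule prod.cong)
    fix f assume f: "f \<in> E"
    show "p * (if \<eta> f \<and> delta (\<phi> \<sigma>) f then 1 else 0) + (1 - p) * (if \<not> \<eta> f then 1 else 0) =
          p * (if \<eta> f \<and> delta \<sigma> f then 1 else 0) + (1 - p) * (if \<not> \<eta> f then 1 else 0)"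
    proof (cases "\<eta> f")
      case True
      obtain u w where fu: "f = {u, w}" using sg f unfolding simple_graph_def by blast
      have "u \<in> C \<longleftrightarrow> w \<in> C" by (rule closed[OF f True fu])
      then have "delta (\<phi> \<sigma>) f = delta \<sigma> f" unfolding fu delta2 \<phi>_def by auto
      then show ?thesis by simp
    qed simp
  qed simp
  define I where "I \<sigma> = IP_weight E p (\<eta>, \<sigma>)" for \<sigma> :: "'v \<Rightarrow> int"
  have "(\<Sum>\<sigma>\<in>spin_configs. I \<sigma> * (if delta \<sigma> e then 1 else 0))
      = (\<Sum>\<sigma>\<in>spin_configs. I \<sigma> * (if delta \<sigma> e then 0 else 1))"
  proof (rule sum.reindex_bij_witness[of _ \<phi> \<phi>])
    fix \<sigma> :: "'v \<Rightarrow> int" assume s: "\<sigma> \<in> spin_configs"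
    show "\<phi> (\<phi> \<sigma>) = \<sigma>" by (rule inv)
    show "\<phi> \<sigma> \<in> spin_configs" by (rule inS[OF s])
    show "I (\<phi> \<sigma>) * (if delta (\<phi> \<sigma>) e then 0 else 1) = I \<sigma> * (if delta \<sigma> e then 1 else 0)"
      using Weq dflip[OF s] unfolding I_def by simp
  next
    fix \<sigma> :: "'v \<Rightarrow> int" assume s: "\<sigma> \<in> spin_configs"
    show "\<phi> (\<phi> \<sigma>) = \<sigma>" by (rule inv)
    show "\<phi> \<sigma> \<in> spin_configs" by (rule inS[OF s])
  qed
  moreover have "(\<Sum>\<sigma>\<in>spin_configs. I \<sigma> * (if delta \<sigma> e then 1 else 0)) + (\<Sum>\<sigma>\<in>spin_configs. I \<sigma> * (if delta \<sigma> e then 0 else 1))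
     = (\<Sum>\<sigma>\<in>spin_configs. I \<sigma>)"
    by (simp add: sum.distrib[symmetric] if_distrib cong: if_cong)
  ultimately show ?thesis unfolding I_def by simp
qed


lemma rowB:
  fixes E :: "'v::finite set set"
  assumes eE: "e \<in> E" and s: "\<sigma> \<in> spin_configs"
    and B: "B = {b\<in>states E. fst b = flip_edge \<eta> e}" and eta: "\<eta> \<in> edge_configs E"
  shows "(\<Sum>b\<in>B. generator E p (\<eta>, \<sigma>) b) =
     p * (if \<not> \<eta> e \<and> delta \<sigma> e then 1 else 0) + (1 - p) * (if \<eta> e then 1 else 0)"
proof -
  let ?b0 = "(flip_edge \<eta> e, \<sigma>)"
  have b0: "?b0 \<in> B" using B flip_edge_in[OF eta eE] s by (simp add: states_def)
  have finB: "finite B" using B finite_states[of E] by simp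
  have "(\<Sum>b\<in>B. generator E p (\<eta>, \<sigma>) b) = (\<Sum>b\<in>B. if b = ?b0 then rate E p (\<eta>, \<sigma>) ?b0 else 0)"
  proof (rule sum.cong)
    fix b assume b: "b \<in> B"
    then have fb: "fst b = flip_edge \<eta> e" using B by simp
    then have nab: "(\<eta>, \<sigma>) \<noteq> b" using flip_edge_ne[of \<eta> e] by auto
    then have g: "generator E p (\<eta>, \<sigma>) b = rate E p (\<eta>, \<sigma>) b" by (simp add: generator_def)
    show "generator E p (\<eta>, \<sigma>) b = (if b = ?b0 then rate E p (\<eta>, \<sigma>) ?b0 else 0)"
    proof (cases "b = ?b0")
      case False
      have "rate E p (\<eta>, \<sigma>) b = 0"
      proof (rule ccontr)
        assume "rate E p (\<eta>, \<sigma>) b \<noteq> 0"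
        from rate_nz[OF this] have "(fst b = \<eta> \<and> (\<exists>x. snd b = flip_spin \<sigma> x)) \<or> (snd b = \<sigma> \<and> (\<exists>f\<in>E. fst b = flip_edge \<eta> f))"
          by simp
        then show False
        proof
          assume "fst b = \<eta> \<and> (\<exists>x. snd b = flip_spin \<sigma> x)"
          with fb flip_edge_ne[of \<eta> e] show False by simp
        next
          assume "snd b = \<sigma> \<and> (\<exists>f\<in>E. fst b = flip_edge \<eta> f)"
          then obtain f where "snd b = \<sigma>" "fst b = flip_edge \<eta> f" by blast
          with fb flip_edge_inj[of \<eta> f e] have "b = ?b0" by (metis prod.collapse)
          with False show False by simp
        qed
      qed
      with False g show ?thesis by simp
    next
      case True
      then show ?thesis using g by simp
    qed
  qed simp
  also have "\<dots> = rate E p (\<eta>, \<sigma>) ?b0" using b0 finB by simp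
  also have "\<dots> = p * (if \<not> \<eta> e \<and> delta \<sigma> e then 1 else 0) + (1 - p) * (if \<eta> e then 1 else 0)"
    by (rule rate_edge[OF eE])
  finally show ?thesis .
qed

theorem proposition3:
  fixes E :: "'v::finite set set" and p s :: real and e :: "'v set" and \<eta> :: "'v set \<Rightarrow> bool"
  assumes "simple_graph E"
    and "0 \<le> p" and "p \<le> 1"
    and "e \<in> E"
    and "\<eta> \<in> edge_configs E"
    and "0 \<le> s"
    and "edge_prob E p s \<eta> > 0"
  shows "((\<lambda>t. joint_edge_prob E p s t \<eta> (flip_edge \<eta> e) / edge_prob E p s \<eta> / t)
          \<longlongrightarrow> (1 - p) * (if \<eta> e then 1 else 0)
             + p * (if \<not> \<eta> e \<and> gamma E \<eta> e then 1 else 0)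
             + p / 2 * (if \<not> \<eta> e \<and> \<not> gamma E \<eta> e then 1 else 0)) (at_right 0)"
proof -
  note sg = assms(1) and eE = assms(4) and eta = assms(5) and pos = assms(7)
  define S where "S = states E"
  define A where "A = {a\<in>S. fst a = \<eta>}"
  define B where "B = {b\<in>S. fst b = flip_edge \<eta> e}"
  define D where "D = edge_prob E p s \<eta>"
  define RHS where "RHS = (1 - p) * (if \<eta> e then 1 else 0)
             + p * (if \<not> \<eta> e \<and> gamma E \<eta> e then 1 else 0)
             + p / 2 * (if \<not> \<eta> e \<and> \<not> gamma E \<eta> e then 1 else (0::real))"
  define r where "r \<sigma> = p * (if \<not> \<eta> e \<and> delta \<sigma> e then 1 else 0) + (1 - p) * (if \<eta> e then 1 else (0::real))" for \<sigma>
  have finS: "finite S" unfolding S_def by (rule finite_states)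
  have finA: "finite A" "finite B" using finS unfolding A_def B_def by auto
  have AS: "a \<in> S" if "a \<in> A" for a using that unfolding A_def by simp
  have BS: "b \<in> S" if "b \<in> B" for b using that unfolding B_def by simp
  have st: "(\<Sum>c\<in>states E. IP E p c * trans E p s c a) = IP E p a" if "a \<in> A" for a
    using stationary[of a E p s] AS[OF that] unfolding S_def by simp
  have D: "D = (\<Sum>a\<in>A. IP E p a)"
    unfolding D_def edge_prob_def S_def[symmetric] A_def[symmetric]
    by (rule sum.cong[OF refl]) (simp add: S_def st)
  have J: "joint_edge_prob E p s t \<eta> (flip_edge \<eta> e) = (\<Sum>a\<in>A. \<Sum>b\<in>B. IP E p a * trans E p t a b)" for t
    unfolding joint_edge_prob_def S_def[symmetric] A_def[symmetric] B_def[symmetric]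
    by (rule sum.cong[OF refl]) (simp add: S_def st)
  have ne: "a \<noteq> b" if "a \<in> A" "b \<in> B" for a b
    using that flip_edge_ne[of \<eta> e] unfolding A_def B_def by auto
  have lim1: "((\<lambda>t. (\<Sum>a\<in>A. \<Sum>b\<in>B. IP E p a * (trans E p t a b / t)) / D)
      \<longlongrightarrow> (\<Sum>a\<in>A. \<Sum>b\<in>B. IP E p a * generator E p a b) / D) (at_right 0)"
    by (intro tendsto_divide tendsto_const tendsto_sum tendsto_mult small_t)
       (use pos in \<open>auto dest: AS BS ne simp: S_def D_def\<close>)
  have ev: "\<forall>\<^sub>F t in at_right 0. (\<Sum>a\<in>A. \<Sum>b\<in>B. IP E p a * (trans E p t a b / t)) / D =
      joint_edge_prob E p s t \<eta> (flip_edge \<eta> e) / edge_prob E p s \<eta> / t"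
    unfolding J D_def[symmetric]
    by (intro eventually_at_rightI[of 0 1]) (use pos in \<open>auto simp: sum_divide_distrib D_def mult.commute\<close>)
  have val: "(\<Sum>a\<in>A. \<Sum>b\<in>B. IP E p a * generator E p a b) / D = RHS"
  proof -
    have inj: "inj_on (Pair \<eta>) spin_configs" by (auto simp: inj_on_def)
    have Aim: "A = Pair \<eta> ` spin_configs" unfolding A_def S_def states_def using eta by auto
    have sA: "(\<Sum>a\<in>A. g a) = (\<Sum>\<sigma>\<in>spin_configs. g (\<eta>, \<sigma>))" for g :: "_ \<Rightarrow> real"
      unfolding Aim by (simp add: sum.reindex[OF inj])
    define Z where "Z = (\<Sum>c\<in>states E. IP_weight E p c)"
    define WS where "WS = (\<Sum>\<sigma>\<in>spin_configs. IP_weight E p (\<eta>, \<sigma>))"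
    have num: "(\<Sum>a\<in>A. \<Sum>b\<in>B. IP E p a * generator E p a b) = (\<Sum>\<sigma>\<in>spin_configs. IP_weight E p (\<eta>, \<sigma>) * r \<sigma>) / Z"
    proof -
      have "(\<Sum>a\<in>A. \<Sum>b\<in>B. IP E p a * generator E p a b) = (\<Sum>\<sigma>\<in>spin_configs. IP E p (\<eta>, \<sigma>) * (\<Sum>b\<in>B. generator E p (\<eta>, \<sigma>) b))"
        unfolding sA by (simp add: sum_distrib_left)
      also have "\<dots> = (\<Sum>\<sigma>\<in>spin_configs. IP E p (\<eta>, \<sigma>) * r \<sigma>)"
        by (rule sum.cong[OF refl]) (simp add: rowB[OF eE _ B_def[unfolded S_def] eta] r_def)
      also have "\<dots> = (\<Sum>\<sigma>\<in>spin_configs. IP_weight E p (\<eta>, \<sigma>) * r \<sigma>) / Z"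
        by (simp add: IP_def Z_def sum_divide_distrib)
      finally show ?thesis .
    qed
    have den: "D = WS / Z" unfolding D sA WS_def IP_def Z_def by (simp add: sum_divide_distrib)
    have "D \<noteq> 0" using pos D_def by simp
    then have Z0: "Z \<noteq> 0" and W0: "WS \<noteq> 0" using den by auto
    have key: "(\<Sum>\<sigma>\<in>spin_configs. IP_weight E p (\<eta>, \<sigma>) * r \<sigma>) = RHS * WS"
    proof (cases "\<eta> e")
      case True
      then show ?thesis by (simp add: r_def RHS_def WS_def sum_distrib_right sum_distrib_left mult_ac)
    next
      case ne: False
      have "(\<Sum>\<sigma>\<in>spin_configs. IP_weight E p (\<eta>, \<sigma>) * r \<sigma>) =
            p * (\<Sum>\<sigma>\<in>spin_configs. IP_weight E p (\<eta>, \<sigma>) * (if delta \<sigma> e then 1 else 0))"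
        using ne by (simp add: r_def sum_distrib_left mult_ac)
      also have "\<dots> = RHS * WS"
      proof (cases "gamma E \<eta> e")
        case True
        have "(\<Sum>\<sigma>\<in>spin_configs. IP_weight E p (\<eta>, \<sigma>) * (if delta \<sigma> e then 1 else 0)) = WS"
          unfolding WS_def
          by (rule sum.cong) (auto dest: gamma_case[OF True])
        then show ?thesis using ne True by (simp add: RHS_def)
      next
        case False
        show ?thesis using nongamma_sum[OF sg eE ne False, of p] ne False
          by (simp add: RHS_def WS_def)
      qed
      finally show ?thesis .
    qed
    show ?thesis unfolding num den key using Z0 W0 by simp
  qed
  show ?thesis
    using Lim_transform_eventually[OF lim1 ev] unfolding val RHS_def .
qed

end
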